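(* Let $n=n_1\cdots n_\ell>2$ with integers $n_i\ge2$ and $U=F_{(n_1,\dots,n_\ell)}$ (modes labelled as in the context). Let $\lambda\in[0,1]$ and $\Lambda=1-(1-\lambda)^{\log_2 n}$. In the lossy distillation protocol with input $\rho^{(n)}(\epsilon)$, the heralding rate satisfies $$h_n(\epsilon;\lambda)\ge(1-\Lambda)^{n-1}h_n(\epsilon)=(1-\lambda)^{(n-1)\log_2 n}\,h_n(\epsilon),$$ and for $\epsilon=0$ equality holds: $h_n(0;\lambda)=(1-\Lambda)^{n-1}h_n(0)=(1-\lambda)^{(n-1)\log_2n}h_n(0)$.
   Context: $F_m=\frac1{\sqrt m}(e^{2\pi ijk/m})_{j,k}$, $F_{(n_1,\dots,n_\ell)}=F_{n_1}\otimes\cdots\otimes F_{n_\ell}$, with $|m_1\rangle\otimes\cdots\otimes|m_\ell\rangle$ labelled as mode $m_1+n_1m_2+\cdots+(n_1\cdots n_{\ell-1})m_\ell$ (includes $F_n$ and $H_{2^r}=F_{(2,\dots,2)}$). Photons have external modes $0,\dots,n-1$ and internal states in a space with orthonormal basis $\{\xi_0,\xi_1,\dots\}$; $\hat U$ acts as $a_j^\dagger[\xi]\mapsto\sum_iU_{ij}a_i^\dagger[\xi]$. Ideal patterns: $(s_0,\dots,s_{n-1})$ with $\sum s_i=n$, $s_0=1$, $\langle s_0,\dots,s_{n-1}|\hat U|1,\dots,1\rangle\ne0$. Input $\rho^{(n)}(\epsilon)$: one photon per mode, the photon in mode $i$ independently having internal state $\xi_0$ with probability $1-\epsilon$, otherwise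 $\xi_j$ with probability $\epsilon/R$ for each $1\le j\le R$ (URS model, fixed $R\ge1$), or $\xi_{i+1}$ with probability $\epsilon$ (OBB limit). Lossless protocol: apply $\hat U$, count photons in modes $1,\dots,n-1$ as $(s_1,\dots,s_{n-1})$, set $s_0=n-\sum_{j\ge1}s_j$, herald iff $(s_0,\dots,s_{n-1})$ is ideal; $h_n(\epsilon)$ is the heralding probability. Lossy protocol: after $\hat U$, each photon is independently lost with probability $\Lambda$ (a loss channel on each mode); then photons in modes $1,\dots,n-1$ are counted as $(s_1,\dots,s_{n-1})$, and success is heralded iff $(1,s_1,\dots,s_{n-1})$ is an ideal pattern; $h_n(\epsilon;\lambda)$ is this heralding probability. *)

theory Defs
  imports "HOL-Analysis.Analysis" "HOL-Library.Multiset" "HOL-Library.FuncSet"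
begin

definition fourier :: "nat \<Rightarrow> nat \<Rightarrow> nat \<Rightarrow> complex" where
  "fourier m j k = exp (2 * complex_of_real pi * \<i> * of_nat j * of_nat k / of_nat m)
                   / complex_of_real (sqrt (real m))"

text \<open>Mixed-radix digit t of mode x: mode m_1 + n_1 m_2 + ... + (n_1...n_(l-1)) m_l.\<close>
definition digit :: "nat list \<Rightarrow> nat \<Rightarrow> nat \<Rightarrow> nat" where
  "digit ns t x = (x div prod_list (take t ns)) mod (ns ! t)"

text \<open>F_(n_1,...,n_l) = F_(n_1) tensor ... tensor F_(n_l), with the above mode labelling.\<close>
definition fourier_tensor :: "nat list \<Rightarrow> nat \<Rightarrow> nat \<Rightarrow> complex" where
  "fourier_tensor ns x y = (\<Prod>t<length ns. fourier (ns ! t) (digit ns t x) (digit ns t y))"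

text \<open>A Fock basis state is a multiset of (external mode, internal state index) pairs;
  a (pure) state is a finitely supported map of such basis states to amplitudes.\<close>
type_synonym occ = "(nat \<times> nat) multiset"
type_synonym fstate = "occ \<Rightarrow> complex"

definition vac :: fstate where
  "vac m = (if m = {#} then 1 else 0)"

text \<open>Creation operator a^dagger_j[xi_k] for p = (j,k):
  a^dagger |m'> = sqrt(m'(p)+1) |m'+p>.\<close>
definition create :: "nat \<times> nat \<Rightarrow> fstate \<Rightarrow> fstate" where
  "create p \<psi> m = (if p \<in># m then complex_of_real (sqrt (real (count m p))) * \<psi> (m - {#p#}) else 0)"

text \<open>Output state U-hat applied to prod_(i<n) a_i^dagger[xi_(c i)] |vac>, where
  U-hat maps a_i^dagger[xi] to sum_j U_(j i) a_j^dagger[xi].\<close>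
fun evolve :: "(nat \<Rightarrow> nat \<Rightarrow> complex) \<Rightarrow> nat \<Rightarrow> (nat \<Rightarrow> nat) \<Rightarrow> nat \<Rightarrow> fstate" where
  "evolve U n c 0 = vac"
| "evolve U n c (Suc i) = (\<lambda>m. \<Sum>j<n. U j i * create (j, c i) (evolve U n c i) m)"

definition output_state :: "(nat \<Rightarrow> nat \<Rightarrow> complex) \<Rightarrow> nat \<Rightarrow> (nat \<Rightarrow> nat) \<Rightarrow> fstate" where
  "output_state U n c = evolve U n c n"

definition mode_count :: "occ \<Rightarrow> nat \<Rightarrow> nat" where
  "mode_count m j = size (filter_mset (\<lambda>p. fst p = j) m)"

definition outcomes :: "nat \<Rightarrow> nat set \<Rightarrow> occ set" where
  "outcomes n K = {m. set_mset m \<subseteq> {..<n} \<times> K \<and> size m = n}"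

definition pattern_occ :: "nat \<Rightarrow> (nat \<Rightarrow> nat) \<Rightarrow> occ" where
  "pattern_occ n s = (\<Sum>j<n. replicate_mset (s j) (j, 0))"

definition ideal :: "(nat \<Rightarrow> nat \<Rightarrow> complex) \<Rightarrow> nat \<Rightarrow> (nat \<Rightarrow> nat) \<Rightarrow> bool" where
  "ideal U n s \<longleftrightarrow> (\<Sum>i<n. s i) = n \<and> s 0 = 1 \<and>
      output_state U n (\<lambda>_. 0) (pattern_occ n s) \<noteq> 0"

datatype noise_model = URS nat | OBB

text \<open>Probability that the photon in mode i has internal state xi_k.\<close>
fun noise_prob :: "noise_model \<Rightarrow> real \<Rightarrow> nat \<Rightarrow> nat \<Rightarrow> real" where
  "noise_prob (URS R) \<epsilon> i k =
     (if k = 0 then 1 - \<epsilon> else if k \<le> R then \<epsilon> / real R else 0)"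
| "noise_prob OBB \<epsilon> i k =
     (if k = 0 then 1 - \<epsilon> else if k = i + 1 then \<epsilon> else 0)"

text \<open>A finite set of internal labels containing the support of the noise model.\<close>
fun colours :: "noise_model \<Rightarrow> nat \<Rightarrow> nat set" where
  "colours (URS R) n = {..R}"
| "colours OBB n = {..n}"

definition configs :: "noise_model \<Rightarrow> nat \<Rightarrow> (nat \<Rightarrow> nat) set" where
  "configs model n = {..<n} \<rightarrow>\<^sub>E colours model n"

definition config_weight :: "noise_model \<Rightarrow> real \<Rightarrow> nat \<Rightarrow> (nat \<Rightarrow> nat) \<Rightarrow> real" where
  "config_weight model \<epsilon> n c = (\<Prod>i<n. noise_prob model \<epsilon> i (c i))"

definition herald_lossless :: "(nat \<Rightarrow> nat \<Rightarrow> complex) \<Rightarrow> nat \<Rightarrow> occ \<Rightarrow> bool" where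
  "herald_lossless U n m \<longleftrightarrow>
     ideal U n (\<lambda>j. if j = 0 then n - (\<Sum>j'\<in>{1..<n}. mode_count m j') else mode_count m j)"

definition h_lossless :: "(nat \<Rightarrow> nat \<Rightarrow> complex) \<Rightarrow> nat \<Rightarrow> noise_model \<Rightarrow> real \<Rightarrow> real" where
  "h_lossless U n model \<epsilon> =
     (\<Sum>c\<in>configs model n. config_weight model \<epsilon> n c *
        (\<Sum>m\<in>outcomes n (colours model n).
           if herald_lossless U n m then (cmod (output_state U n c m))\<^sup>2 else 0))"

text \<open>Each of k photons survives independently with probability 1 - Lambda.\<close>
definition survive_prob :: "real \<Rightarrow> nat \<Rightarrow> nat \<Rightarrow> real" where
  "survive_prob \<Lambda> k t = real (k choose t) * (1 - \<Lambda>) ^ t * \<Lambda> ^ (k - t)"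

definition herald_lossy_prob :: "(nat \<Rightarrow> nat \<Rightarrow> complex) \<Rightarrow> nat \<Rightarrow> real \<Rightarrow> occ \<Rightarrow> real" where
  "herald_lossy_prob U n \<Lambda> m =
     (\<Sum>t\<in>{1..<n} \<rightarrow>\<^sub>E {..n}.
        if ideal U n (\<lambda>j. if j = 0 then 1 else t j)
        then (\<Prod>j\<in>{1..<n}. survive_prob \<Lambda> (mode_count m j) (t j)) else 0)"

definition h_lossy :: "(nat \<Rightarrow> nat \<Rightarrow> complex) \<Rightarrow> nat \<Rightarrow> noise_model \<Rightarrow> real \<Rightarrow> real \<Rightarrow> real" where
  "h_lossy U n model \<epsilon> \<Lambda> =
     (\<Sum>c\<in>configs model n. config_weight model \<epsilon> n c *
        (\<Sum>m\<in>outcomes n (colours model n).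
           (cmod (output_state U n c m))\<^sup>2 * herald_lossy_prob U n \<Lambda> m))"

end

theory Submission
  imports Defs
begin


definition rw :: "nat \<Rightarrow> complex" where
  "rw N = exp (2 * complex_of_real pi * \<i> * of_nat 1 / of_nat N)"

lemma rw_pow: "rw N ^ j = exp (2 * complex_of_real pi * \<i> * of_nat j / of_nat N)"
  unfolding rw_def by (simp flip: exp_of_nat_mult add: field_simps)

lemma rw_pow_eq_1: "N \<ge> 1 \<Longrightarrow> rw N ^ j = 1 \<longleftrightarrow> N dvd j"
  unfolding rw_pow by (rule complex_root_unity_eq_1)

lemma rw_pow_mod: "N \<ge> 1 \<Longrightarrow> rw N ^ j = rw N ^ (j mod N)"
proof -
  assume N: "N \<ge> 1"
  have "rw N ^ j = rw N ^ (N * (j div N) + j mod N)" by simp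
  also have "\<dots> = (rw N ^ N) ^ (j div N) * rw N ^ (j mod N)" by (simp only: power_add power_mult)
  finally have "rw N ^ j = (rw N ^ N) ^ (j div N) * rw N ^ (j mod N)" .
  moreover have "rw N ^ N = 1" using rw_pow_eq_1[OF N] by simp
  ultimately show ?thesis by simp
qed

lemma fourier_rw: "fourier N a b = rw N ^ (a * b) / complex_of_real (sqrt (real N))"
  unfolding fourier_def rw_pow by (simp add: mult.assoc)

lemma fourier_shift:
  assumes "N \<ge> 1"
  shows "fourier N a ((b + 1) mod N) = rw N ^ a * fourier N a b"
proof -
  have "rw N ^ (a * ((b + 1) mod N)) = rw N ^ (a * (b + 1))"
    using rw_pow_mod[OF assms] by (metis mod_mult_right_eq)
  also have "\<dots> = rw N ^ a * rw N ^ (a * b)"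
    by (simp add: algebra_simps power_add)
  finally show ?thesis unfolding fourier_rw by simp
qed

lemma create_comm: "create p (create q \<psi>) = create q (create p \<psi>)"
proof
  fix m
  show "create p (create q \<psi>) m = create q (create p \<psi>) m"
  proof (cases "p = q")
    case True then show ?thesis by simp
  next
    case False
    then show ?thesis
      unfolding create_def
      by (auto simp: in_diff_count diff_right_commute add_mset_commute)
  qed
qed

lemma create_lin:
  "create p (\<lambda>m'. \<Sum>j\<in>J. a j * \<phi> j m') m = (\<Sum>j\<in>J. a j * create p (\<phi> j) m)"
  unfolding create_def by (auto simp: sum_distrib_left algebra_simps)

definition PP :: "nat list \<Rightarrow> nat \<Rightarrow> nat" where
  "PP ns t = prod_list (take t ns)"

lemma PP_split: "a \<le> b \<Longrightarrow> PP ns b = PP ns a * prod_list (take (b - a) (drop a ns))"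
  unfolding PP_def by (metis take_add le_add_diff_inverse prod_list.append)

lemma PP_Suc: "t < length ns \<Longrightarrow> PP ns (Suc t) = PP ns t * ns ! t"
  unfolding PP_def by (simp add: take_Suc_conv_app_nth)

lemma PP_pos: "\<forall>k\<in>set ns. k > 0 \<Longrightarrow> PP ns t > 0"
  unfolding PP_def by (metis in_set_takeD less_not_refl prod_list_zero_iff neq0_conv)

lemma digit_PP: "digit ns t x = (x div PP ns t) mod (ns ! t)"
  unfolding digit_def PP_def by simp

lemma digit_via_mod:
  assumes "PP ns t > 0"
  shows "digit ns t x = (x mod (PP ns t * ns ! t)) div PP ns t"
  using assms by (simp add: digit_PP mod_mult2_eq)

lemma digit_other:
  assumes pos: "\<forall>k\<in>set ns. k > 0" and tau: "\<tau> < length ns" and s: "s < length ns" "s \<noteq> \<tau>"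
    and m: "x mod PP ns \<tau> = y mod PP ns \<tau>" and d: "x div PP ns (Suc \<tau>) = y div PP ns (Suc \<tau>)"
  shows "digit ns s x = digit ns s y"
proof (cases "s < \<tau>")
  case True
  have "PP ns (Suc s) dvd PP ns \<tau>" using PP_split[of "Suc s" \<tau> ns] True by simp
  then have "x mod PP ns (Suc s) = y mod PP ns (Suc s)" using m by (metis mod_mod_cancel)
  then show ?thesis using digit_via_mod[OF PP_pos[OF pos]] PP_Suc[OF s(1)] by metis
next
  case False
  then have "Suc \<tau> \<le> s" using s by simp
  from PP_split[OF this, of ns] d show ?thesis
    by (simp add: digit_PP div_mult2_eq)
qed

definition sig :: "nat list \<Rightarrow> nat \<Rightarrow> nat \<Rightarrow> nat" where
  "sig ns \<tau> x = x mod PP ns \<tau> + PP ns \<tau> * ((digit ns \<tau> x + 1) mod (ns ! \<tau>))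
     + PP ns \<tau> * ns ! \<tau> * (x div (PP ns \<tau> * ns ! \<tau>))"

lemma sig_props:
  assumes P: "P = PP ns \<tau>" and N: "N = ns ! \<tau>" and Ppos: "P > 0" and Npos: "N > 0"
  shows "sig ns \<tau> x mod P = x mod P"
    and "sig ns \<tau> x div (P * N) = x div (P * N)"
    and "digit ns \<tau> (sig ns \<tau> x) = (digit ns \<tau> x + 1) mod N"
proof -
  define r where "r = (digit ns \<tau> x + 1) mod N"
  define q where "q = x div (P * N)"
  have r: "r < N" using Npos by (simp add: r_def)
  have sx: "sig ns \<tau> x = x mod P + P * r + P * N * q"
    by (simp add: sig_def P N r_def q_def)
  have lt: "x mod P + P * r < P * N"
  proof -
    have "x mod P < P" using Ppos by simp
    moreover have "P * r + P \<le> P * N" using r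
      by (metis Suc_leI mult_Suc_right mult_le_mono2 add.commute)
    ultimately show ?thesis by linarith
  qed
  show "sig ns \<tau> x mod P = x mod P" unfolding sx
    by (simp add: mult.assoc)
  show "sig ns \<tau> x div (P * N) = x div (P * N)" unfolding sx
    using lt Ppos Npos by (simp add: q_def)
  have "sig ns \<tau> x div P = r + N * q" unfolding sx using Ppos
    by (simp add: mult.assoc flip: distrib_left)
  then show "digit ns \<tau> (sig ns \<tau> x) = (digit ns \<tau> x + 1) mod N"
    using r by (simp add: digit_PP P[symmetric] N[symmetric] r_def)
qed

lemma recompose:
  assumes "P > (0::nat)" shows "x = x mod P + P * (x div P mod N) + P * N * (x div (P * N))"
proof -
  have a: "x mod (P * N) = P * (x div P mod N) + x mod P" by (rule mod_mult2_eq)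
  have b: "x = P * N * (x div (P * N)) + x mod (P * N)" by simp
  show ?thesis using a b by linarith
qed

lemma mod_suc_inj: "(a + 1) mod N = (b + 1) mod N \<Longrightarrow> a < N \<Longrightarrow> b < N \<Longrightarrow> a = (b::nat)"
  by (cases "a + 1 = N"; cases "b + 1 = N") auto

lemma sig_inj:
  assumes pos: "\<forall>k\<in>set ns. k > 0" and tau: "\<tau> < length ns"
  shows "inj (sig ns \<tau>)"
proof
  fix x y assume e: "sig ns \<tau> x = sig ns \<tau> y"
  define P where "P = PP ns \<tau>"
  define N where "N = ns ! \<tau>"
  have Pp: "P > 0" using PP_pos[OF pos] P_def by simp
  have Np: "N > 0" using pos tau N_def by simp
  note sp = sig_props[OF P_def N_def Pp Np]
  have 1: "x mod P = y mod P" using e sp(1)[of x] sp(1)[of y] by simp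
  have 2: "x div (P*N) = y div (P*N)" using e sp(2)[of x] sp(2)[of y] by simp
  have "(digit ns \<tau> x + 1) mod N = (digit ns \<tau> y + 1) mod N" using e sp(3)[of x] sp(3)[of y] by simp
  moreover have "digit ns \<tau> x < N" "digit ns \<tau> y < N" using Np by (simp_all add: digit_PP N_def)
  ultimately have "digit ns \<tau> x = digit ns \<tau> y"
    by (rule mod_suc_inj)
  then have 3: "x div P mod N = y div P mod N" by (simp add: digit_PP P_def N_def)
  show "x = y" using recompose[OF Pp, of x N] recompose[OF Pp, of y N] 1 2 3 by simp
qed

lemma sig_bound:
  assumes Ppos: "P > 0" and Npos: "N > 0" and P: "P = PP ns \<tau>" and N: "N = ns ! \<tau>"
  shows "sig ns \<tau> x < P * N * (x div (P * N) + 1)"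
proof -
  define r where "r = (digit ns \<tau> x + 1) mod N"
  define q where "q = x div (P * N)"
  have r: "r < N" using Npos by (simp add: r_def)
  have sx: "sig ns \<tau> x = x mod P + P * r + P * N * q"
    by (simp add: sig_def P N r_def q_def)
  have "x mod P < P" using Ppos by simp
  moreover have "P * r + P \<le> P * N" using r
    by (metis Suc_leI mult_Suc_right mult_le_mono2 add.commute)
  ultimately have "sig ns \<tau> x < P * N + P * N * q" unfolding sx by linarith
  then show ?thesis by (simp add: q_def algebra_simps)
qed

lemma sig_less:
  assumes pos: "\<forall>k\<in>set ns. k > 0" and tau: "\<tau> < length ns" and x: "x < prod_list ns"
  shows "sig ns \<tau> x < prod_list ns"
proof -
  define P where "P = PP ns \<tau>"
  define N where "N = ns ! \<tau>"
  have Pp: "P > 0" using PP_pos[OF pos] P_def by simp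
  have Np: "N > 0" using pos tau N_def by simp
  define K where "K = prod_list (take (length ns - Suc \<tau>) (drop (Suc \<tau>) ns))"
  have "PP ns (length ns) = PP ns (Suc \<tau>) * K"
    unfolding K_def by (rule PP_split) (use tau in simp)
  then have K: "prod_list ns = P * N * K"
    using PP_Suc[OF tau] by (simp add: P_def N_def PP_def)
  have "sig ns \<tau> x < P * N * (x div (P * N) + 1)"
    by (rule sig_bound[OF Pp Np P_def N_def])
  also have "\<dots> \<le> P * N * K"
  proof -
    have "x div (P * N) < K" using x K Pp Np
      by (metis div_less_iff_less_mult mult.commute mult_pos_pos)
    then have "x div (P * N) + 1 \<le> K" by simp
    then show ?thesis by (rule mult_le_mono2)
  qed
  finally show ?thesis using K by simp
qed

lemma sig_perm:
  assumes pos: "\<forall>k\<in>set ns. k > 0" and tau: "\<tau> < length ns"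
  shows "mset (map (sig ns \<tau>) [0..<prod_list ns]) = mset [0..<prod_list ns]"
proof -
  have inj: "inj_on (sig ns \<tau>) {..<prod_list ns}" using sig_inj[OF pos tau] by (simp add: inj_on_def inj_def)
  have "sig ns \<tau> ` {..<prod_list ns} = {..<prod_list ns}"
    by (rule endo_inj_surj) (use sig_less[OF pos tau] inj in auto)
  then have "set (map (sig ns \<tau>) [0..<prod_list ns]) = set [0..<prod_list ns]"
    by (simp add: atLeast0LessThan)
  moreover have "distinct (map (sig ns \<tau>) [0..<prod_list ns])"
    using inj by (simp add: distinct_map atLeast0LessThan)
  ultimately show ?thesis
    using set_eq_iff_mset_eq_distinct[of "map (sig ns \<tau>) [0..<prod_list ns]" "[0..<prod_list ns]"]
    by simp
qed

lemma U_shift: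
  assumes pos: "\<forall>k\<in>set ns. k > 0" and tau: "\<tau> < length ns"
  shows "fourier_tensor ns j (sig ns \<tau> k) = rw (ns ! \<tau>) ^ digit ns \<tau> j * fourier_tensor ns j k"
proof -
  define P where "P = PP ns \<tau>"
  define N where "N = ns ! \<tau>"
  have Pp: "P > 0" using PP_pos[OF pos] P_def by simp
  have Np: "N > 0" using pos tau N_def by simp
  note sp = sig_props[OF P_def N_def Pp Np]
  have N1: "N \<ge> 1" using Np by simp
  have oth: "digit ns s (sig ns \<tau> k) = digit ns s k" if "s < length ns" "s \<noteq> \<tau>" for s
  proof -
    have a: "sig ns \<tau> k mod PP ns \<tau> = k mod PP ns \<tau>" using sp(1) P_def by simp
    have b: "sig ns \<tau> k div PP ns (Suc \<tau>) = k div PP ns (Suc \<tau>)"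
      using sp(2) PP_Suc[OF tau] P_def N_def by simp
    show ?thesis using digit_other[OF pos tau that a b] .
  qed
  let ?L = "{..<length ns}"
  have t: "\<tau> \<in> ?L" using tau by simp
  have "fourier_tensor ns j (sig ns \<tau> k) =
     fourier N (digit ns \<tau> j) ((digit ns \<tau> k + 1) mod N) *
     (\<Prod>s\<in>?L - {\<tau>}. fourier (ns ! s) (digit ns s j) (digit ns s k))"
  proof -
    have e1: "digit ns \<tau> (sig ns \<tau> k) = (digit ns \<tau> k + 1) mod N" by (rule sp(3))
    have e2: "(\<Prod>s\<in>?L - {\<tau>}. fourier (ns ! s) (digit ns s j) (digit ns s (sig ns \<tau> k)))
       = (\<Prod>s\<in>?L - {\<tau>}. fourier (ns ! s) (digit ns s j) (digit ns s k))"
      by (rule prod.cong) (simp_all add: oth)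
    show ?thesis
      unfolding fourier_tensor_def prod.remove[OF finite_lessThan t] e1 e2 N_def by (rule refl)
  qed
  also have "\<dots> = rw N ^ digit ns \<tau> j * (fourier N (digit ns \<tau> j) (digit ns \<tau> k) *
     (\<Prod>s\<in>?L - {\<tau>}. fourier (ns ! s) (digit ns s j) (digit ns s k)))"
    using Np by (simp only: fourier_shift[OF N1] mult.assoc)
  also have "\<dots> = rw N ^ digit ns \<tau> j * fourier_tensor ns j k"
    unfolding fourier_tensor_def prod.remove[OF finite_lessThan t] N_def by (rule refl)
  finally show ?thesis unfolding N_def .
qed

definition Aop :: "(nat \<Rightarrow> nat \<Rightarrow> complex) \<Rightarrow> nat \<Rightarrow> nat \<Rightarrow> fstate \<Rightarrow> fstate" where
  "Aop U n k \<psi> = (\<lambda>m. \<Sum>j<n. U j k * create (j, 0) \<psi> m)"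

lemma evolve_fold: "evolve U n (\<lambda>_. 0) i = fold (Aop U n) [0..<i] vac"
  by (induction i) (simp_all add: Aop_def)

lemma Aop_comm: "Aop U n k \<circ> Aop U n l = Aop U n l \<circ> Aop U n k"
proof (rule ext)
  fix \<psi>
  show "(Aop U n k \<circ> Aop U n l) \<psi> = (Aop U n l \<circ> Aop U n k) \<psi>"
  proof (rule ext)
    fix m
    have "(Aop U n k \<circ> Aop U n l) \<psi> m =
       (\<Sum>j<n. \<Sum>j'<n. U j k * U j' l * create (j, 0) (create (j', 0) \<psi>) m)"
      by (simp add: Aop_def create_lin sum_distrib_left mult.assoc)
    also have "\<dots> = (\<Sum>j'<n. \<Sum>j<n. U j k * U j' l * create (j', 0) (create (j, 0) \<psi>) m)"
      by (subst sum.swap) (simp add: create_comm)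
    also have "\<dots> = (Aop U n l \<circ> Aop U n k) \<psi> m"
      by (simp add: Aop_def create_lin sum_distrib_left mult.assoc mult.left_commute)
    finally show "(Aop U n k \<circ> Aop U n l) \<psi> m = (Aop U n l \<circ> Aop U n k) \<psi> m" .
  qed
qed

definition Phi :: "(nat \<times> nat \<Rightarrow> nat) \<Rightarrow> complex \<Rightarrow> fstate \<Rightarrow> fstate" where
  "Phi g w \<psi> = (\<lambda>m. w ^ sum_mset (image_mset g m) * \<psi> m)"

lemma Phi_create: "w ^ sum_mset (image_mset g m) * create p \<psi> m = w ^ g p * create p (Phi g w \<psi>) m"
proof (cases "p \<in># m")
  case True
  have "sum_mset (image_mset g m) = g p + sum_mset (image_mset g (m - {#p#}))"
    using True by (metis image_mset_add_mset insert_DiffM sum_mset.insert)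
  then show ?thesis using True by (simp add: create_def Phi_def power_add algebra_simps)
next
  case False then show ?thesis by (simp add: create_def)
qed

lemma Phi_Aop:
  assumes h: "\<And>j k. U j (\<sigma> k) = w ^ g (j, 0) * U j k"
  shows "Phi g w (Aop U n k \<psi>) = Aop U n (\<sigma> k) (Phi g w \<psi>)"
proof
  fix m
  have "Phi g w (Aop U n k \<psi>) m = (\<Sum>j<n. U j k * (w ^ sum_mset (image_mset g m) * create (j, 0) \<psi> m))"
    by (simp add: Phi_def Aop_def sum_distrib_left algebra_simps)
  also have "\<dots> = (\<Sum>j<n. U j (\<sigma> k) * create (j, 0) (Phi g w \<psi>) m)"
    unfolding Phi_create by (simp add: h algebra_simps)
  finally show "Phi g w (Aop U n k \<psi>) m = Aop U n (\<sigma> k) (Phi g w \<psi>) m" by (simp add: Aop_def)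
qed

lemma Phi_fold:
  assumes h: "\<And>j k. U j (\<sigma> k) = w ^ g (j, 0) * U j k"
  shows "Phi g w (fold (Aop U n) xs \<psi>) = fold (Aop U n) (map \<sigma> xs) (Phi g w \<psi>)"
  by (induction xs arbitrary: \<psi>) (simp_all add: Phi_Aop[where U=U and \<sigma>=\<sigma> and w=w and g=g, OF h])

lemma Phi_vac: "Phi g w vac = vac"
  by (auto simp: Phi_def vac_def)

lemma suppression:
  assumes pos: "\<forall>k\<in>set ns. k > 0" and tau: "\<tau> < length ns"
    and nz: "output_state (fourier_tensor ns) (prod_list ns) (\<lambda>_. 0) m \<noteq> 0"
  shows "ns ! \<tau> dvd sum_mset (image_mset (\<lambda>p. digit ns \<tau> (fst p)) m)"
proof -
  define g where "g = (\<lambda>p::nat\<times>nat. digit ns \<tau> (fst p))"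
  define w where "w = rw (ns ! \<tau>)"
  define U where "U = fourier_tensor ns"
  define n where "n = prod_list ns"
  define \<sigma> where "\<sigma> = sig ns \<tau>"
  have h: "U j (\<sigma> k) = w ^ g (j, 0) * U j k" for j k
    unfolding U_def \<sigma>_def w_def g_def fst_conv by (rule U_shift[OF pos tau])
  define out where "out = fold (Aop U n) [0..<n] vac"
  have out: "output_state U n (\<lambda>_. 0) = out"
    unfolding output_state_def out_def by (rule evolve_fold)
  have F: "fold (Aop U n) (map \<sigma> [0..<n]) = fold (Aop U n) [0..<n]"
    by (rule fold_multiset_equiv[OF Aop_comm]) (simp only: \<sigma>_def n_def sig_perm[OF pos tau])
  have "Phi g w out = out"
    unfolding out_def Phi_fold[where U=U and \<sigma>=\<sigma> and w=w and g=g, OF h] Phi_vac F ..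
  then have "Phi g w out m = out m" by simp
  then have "w ^ sum_mset (image_mset g m) * out m = out m" by (simp add: Phi_def)
  moreover have "out m \<noteq> 0"
  proof -
    have "output_state (fourier_tensor ns) (prod_list ns) (\<lambda>_. 0) = out"
      using out by (simp only: U_def n_def)
    then show ?thesis using nz by simp
  qed
  ultimately have "w ^ sum_mset (image_mset g m) = 1" using mult_cancel_right2 by blast
  moreover have "ns ! \<tau> \<ge> 1" using pos tau by (simp add: Suc_le_eq)
  ultimately show ?thesis using rw_pow_eq_1[of "ns ! \<tau>" "sum_mset (image_mset g m)"]
    unfolding w_def g_def by blast
qed


lemma mode_count_add: "mode_count (add_mset p m) j = mode_count m j + (if fst p = j then 1 else 0)"
  by (simp add: mode_count_def)

lemma msum_modes:
  assumes "set_mset m \<subseteq> {..<n} \<times> K"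
  shows "sum_mset (image_mset (\<lambda>p. f (fst p)) m) = (\<Sum>j<n. f j * mode_count m j)"
  using assms
proof (induction m)
  case empty then show ?case by (simp add: mode_count_def)
next
  case (add p m)
  then have IH: "sum_mset (image_mset (\<lambda>p. f (fst p)) m) = (\<Sum>j<n. f j * mode_count m j)"
    and p: "fst p < n" by auto
  have "(\<Sum>j<n. f j * mode_count (add_mset p m) j)
      = (\<Sum>j<n. f j * mode_count m j) + (\<Sum>j<n. if fst p = j then f j else 0)"
  proof -
    have "f j * mode_count (add_mset p m) j = f j * mode_count m j + (if fst p = j then f j else 0)" for j
      by (simp add: mode_count_add algebra_simps)
    then show ?thesis by (simp only: sum.distrib)
  qed
  also have "(\<Sum>j<n. if fst p = j then f j else 0) = f (fst p)"
    using p by (simp add: sum.delta)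
  finally show ?case using IH by simp
qed

lemma size_modes:
  assumes "set_mset m \<subseteq> {..<n} \<times> K"
  shows "(\<Sum>j<n. mode_count m j) = size m"
  using msum_modes[OF assms, of "\<lambda>_. 1"] by simp

lemma msum_pattern:
  "sum_mset (image_mset g (pattern_occ n s)) = (\<Sum>j<n. s j * g (j, 0))"
  unfolding pattern_occ_def by (induction n) simp_all

lemma ideal_cong:
  assumes "\<And>j. j < n \<Longrightarrow> s j = s' j" and "n > 0"
  shows "ideal U n s = ideal U n s'"
proof -
  have "pattern_occ n s = pattern_occ n s'" unfolding pattern_occ_def using assms by simp
  moreover have "(\<Sum>i<n. s i) = (\<Sum>i<n. s' i)" using assms by simp
  moreover have "s 0 = s' 0" using assms by auto
  ultimately show ?thesis unfolding ideal_def by (auto simp: pattern_occ_def)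
qed

lemma sum_split0: "n > 0 \<Longrightarrow> (\<Sum>i<n. s i) = s 0 + (\<Sum>i\<in>{1..<n}. s (i::nat))"
proof -
  assume "n > 0"
  then have "{..<n} = insert 0 {1..<n}" by auto
  then show ?thesis by simp
qed

lemma digits_zero:
  assumes "x < prod_list ns" "\<And>t. t < length ns \<Longrightarrow> digit ns t x = 0"
  shows "x = 0"
  using assms
proof (induction ns arbitrary: x)
  case Nil then show ?case by simp
next
  case (Cons a ns)
  have a: "a > 0" using Cons.prems(1) by (auto intro: gr0I)
  have d0: "x mod a = 0" using Cons.prems(2)[of 0] by (simp add: digit_def)
  have ds: "digit ns t (x div a) = 0" if "t < length ns" for t
    using Cons.prems(2)[of "Suc t"] that by (simp add: digit_def div_mult2_eq)
  have "x div a < prod_list ns" using Cons.prems(1) a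
    by (simp add: div_less_iff_less_mult mult.commute)
  then have "x div a = 0" using Cons.IH ds by blast
  moreover have "x = x div a * a + x mod a" by simp
  ultimately show ?case using d0 by simp
qed

lemma digit_0: "digit ns t 0 = 0" by (simp add: digit_def)

lemma digit_lt: "\<forall>k\<in>set ns. k > 0 \<Longrightarrow> t < length ns \<Longrightarrow> digit ns t x < ns ! t"
  by (simp add: digit_def)

lemma sum_one_nat:
  assumes "finite A" "sum (g::_\<Rightarrow>nat) A = 1"
  shows "\<exists>j0\<in>A. g j0 = 1 \<and> (\<forall>j\<in>A - {j0}. g j = 0)"
proof -
  have "\<not> (\<forall>j\<in>A. g j = 0)"
  proof
    assume "\<forall>j\<in>A. g j = 0"
    then have "sum g A = 0" by simp
    then show False using assms by simp
  qed
  then obtain j0 where j0: "j0 \<in> A" "g j0 \<noteq> 0" by blast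
  have "sum g A = g j0 + sum g (A - {j0})" using j0 assms by (simp add: sum.remove)
  then have 12: "g j0 = 1 \<and> sum g (A - {j0}) = 0" using j0 assms by linarith
  then have 1: "g j0 = 1" and 2: "sum g (A - {j0}) = 0" by blast+
  from 2 have "\<forall>j\<in>A - {j0}. g j = 0" using assms(1) by simp
  then show ?thesis using j0 1 by blast
qed



lemma survive_nonneg: "0 \<le> L \<Longrightarrow> L \<le> 1 \<Longrightarrow> survive_prob L k t \<ge> 0"
  unfolding survive_prob_def by simp

lemma survive_same: "survive_prob L k k = (1 - L) ^ k"
  unfolding survive_prob_def by simp

lemma hlp_nonneg: "0 \<le> L \<Longrightarrow> L \<le> 1 \<Longrightarrow> herald_lossy_prob U n L m \<ge> 0"
  unfolding herald_lossy_prob_def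
  by (intro sum_nonneg) (auto intro!: prod_nonneg survive_nonneg)

lemma outcomes_set: "m \<in> outcomes n K \<Longrightarrow> set_mset m \<subseteq> {..<n} \<times> K"
  by (simp add: outcomes_def)

lemma outcomes_size: "m \<in> outcomes n K \<Longrightarrow> size m = n"
  by (simp add: outcomes_def)

lemma herald_iff:
  assumes n: "n > 0" and m: "m \<in> outcomes n K"
  shows "herald_lossless U n m \<longleftrightarrow>
     ideal U n (\<lambda>j. if j = 0 then 1 else restrict (mode_count m) {1..<n} j)"
    and "ideal U n (\<lambda>j. if j = 0 then 1 else restrict (mode_count m) {1..<n} j) \<Longrightarrow>
     (\<Sum>j\<in>{1..<n}. mode_count m j) = n - 1"
proof -
  let ?t0 = "restrict (mode_count m) {1..<n}"
  let ?S = "\<Sum>j\<in>{1..<n}. mode_count m j"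
  let ?s = "\<lambda>j. if j = 0 then n - ?S else mode_count m j"
  let ?s1 = "\<lambda>j. if j = 0 then 1 else ?t0 j"
  have cong: "ideal U n ?s = ideal U n ?s1" if "n - ?S = 1"
    by (rule ideal_cong) (use that n in auto)
  have A: "?S = n - 1" if "ideal U n ?s1"
  proof -
    have "(\<Sum>i<n. ?s1 i) = n" using that by (simp add: ideal_def)
    then have "1 + (\<Sum>i\<in>{1..<n}. ?t0 i) = n" using sum_split0[OF n, of ?s1] by simp
    moreover have "(\<Sum>i\<in>{1..<n}. ?t0 i) = ?S" by (rule sum.cong) auto
    ultimately show ?thesis by simp
  qed
  show "ideal U n ?s1 \<Longrightarrow> ?S = n - 1" by (rule A)
  show "herald_lossless U n m \<longleftrightarrow> ideal U n ?s1"
  proof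
    assume "herald_lossless U n m"
    then have h: "ideal U n ?s" by (simp add: herald_lossless_def)
    then have "n - ?S = 1" by (simp add: ideal_def)
    then show "ideal U n ?s1" using cong h by simp
  next
    assume h: "ideal U n ?s1"
    then have "n - ?S = 1" using A n by simp
    then show "herald_lossless U n m" using cong h by (simp add: herald_lossless_def)
  qed
qed

lemma t0_mem:
  assumes m: "m \<in> outcomes n K"
  shows "restrict (mode_count m) {1..<n} \<in> {1..<n} \<rightarrow>\<^sub>E {..n}"
proof -
  have "mode_count m j \<le> n" for j
    using outcomes_size[OF m] unfolding mode_count_def by (metis size_filter_mset_lesseq)
  then show ?thesis by auto
qed

definition fterm :: "(nat \<Rightarrow> nat \<Rightarrow> complex) \<Rightarrow> nat \<Rightarrow> real \<Rightarrow> occ \<Rightarrow> (nat \<Rightarrow> nat) \<Rightarrow> real" where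
  "fterm U n L m t = (if ideal U n (\<lambda>j. if j = 0 then 1 else t j)
        then (\<Prod>j\<in>{1..<n}. survive_prob L (mode_count m j) (t j)) else 0)"

lemma hlp_fterm: "herald_lossy_prob U n L m = (\<Sum>t\<in>{1..<n} \<rightarrow>\<^sub>E {..n}. fterm U n L m t)"
  unfolding herald_lossy_prob_def fterm_def ..

lemma fterm_t0:
  assumes n: "n > 0" and m: "m \<in> outcomes n K"
  shows "fterm U n L m (restrict (mode_count m) {1..<n}) =
    (if herald_lossless U n m then (1 - L) ^ (n - 1) else 0)"
proof (cases "herald_lossless U n m")
  case True
  then have I: "ideal U n (\<lambda>j. if j = 0 then 1 else restrict (mode_count m) {1..<n} j)"
    using herald_iff(1)[OF n m] by simp
  then have S: "(\<Sum>j\<in>{1..<n}. mode_count m j) = n - 1" using herald_iff(2)[OF n m] by simp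
  have "(\<Prod>j\<in>{1..<n}. survive_prob L (mode_count m j) (restrict (mode_count m) {1..<n} j))
      = (\<Prod>j\<in>{1..<n}. (1 - L) ^ mode_count m j)"
    by (rule prod.cong) (auto simp: survive_same)
  also have "\<dots> = (1 - L) ^ (\<Sum>j\<in>{1..<n}. mode_count m j)" by (simp add: power_sum)
  also have "\<dots> = (1 - L) ^ (n - 1)" by (simp only: S)
  finally show ?thesis using I True unfolding fterm_def by simp
next
  case False
  then show ?thesis using herald_iff(1)[OF n m] unfolding fterm_def by simp
qed

lemma hlp_ge:
  assumes n: "n > 0" and m: "m \<in> outcomes n K" and L: "0 \<le> L" "L \<le> 1"
  shows "herald_lossy_prob U n L m \<ge> (if herald_lossless U n m then (1 - L) ^ (n - 1) else 0)"
proof -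
  have "fterm U n L m (restrict (mode_count m) {1..<n}) \<le> (\<Sum>t\<in>{1..<n} \<rightarrow>\<^sub>E {..n}. fterm U n L m t)"
    by (rule member_le_sum) (use t0_mem[OF m] L in \<open>auto simp: fterm_def intro!: prod_nonneg survive_nonneg
        finite_PiE\<close>)
  then show ?thesis using fterm_t0[OF n m] hlp_fterm by metis
qed



lemma fterm_zero:
  assumes pos: "\<forall>k\<in>set ns. k > 0" and nn: "n = prod_list ns" and UU: "U = fourier_tensor ns"
    and n: "n > 0" and m: "m \<in> outcomes n K" and nz: "output_state U n (\<lambda>_. 0) m \<noteq> 0"
    and t: "t \<in> {1..<n} \<rightarrow>\<^sub>E {..n}" and ft: "fterm U n L m t \<noteq> 0"
  shows "t = restrict (mode_count m) {1..<n}"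
proof -
  define k where "k = mode_count m"
  define s where "s = (\<lambda>j. if j = 0 then 1 else t j)"
  have I: "ideal U n s" and P: "(\<Prod>j\<in>{1..<n}. survive_prob L (k j) (t j)) \<noteq> 0"
    using ft by (auto simp: fterm_def s_def k_def split: if_splits)
  have le: "t j \<le> k j" if "j \<in> {1..<n}" for j
  proof (rule ccontr)
    assume "\<not> t j \<le> k j"
    then have "survive_prob L (k j) (t j) = 0" by (simp add: survive_prob_def)
    then have "(\<Prod>j\<in>{1..<n}. survive_prob L (k j) (t j)) = 0"
      using that by (simp only: prod_zero_iff[OF finite_atLeastLessThan]) blast
    with P show False by simp
  qed
  have sumt: "(\<Sum>j\<in>{1..<n}. t j) = n - 1"
  proof -
    have "(\<Sum>i<n. s i) = n" using I by (simp add: ideal_def)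
    then have "s 0 + (\<Sum>i\<in>{1..<n}. s i) = n" using sum_split0[OF n, of s] by simp
    moreover have "(\<Sum>i\<in>{1..<n}. s i) = (\<Sum>i\<in>{1..<n}. t i)" by (rule sum.cong) (auto simp: s_def)
    ultimately show ?thesis by (simp add: s_def)
  qed
  have sumk: "k 0 + (\<Sum>j\<in>{1..<n}. k j) = n"
    using size_modes[OF outcomes_set[OF m]] outcomes_size[OF m] sum_split0[OF n, of k]
    by (simp add: k_def)
  define g where "g j = k j - t j" for j
  have sumg: "(\<Sum>j\<in>{1..<n}. g j) = (\<Sum>j\<in>{1..<n}. k j) - (n - 1)"
    unfolding g_def using sum_subtractf_nat[of "{1..<n}" t k] le sumt by simp
  have gz: "\<forall>j\<in>{1..<n}. g j = 0"
  proof (cases "k 0 = 0")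
    case False
    then have "(\<Sum>j\<in>{1..<n}. k j) \<le> n - 1" using sumk by simp
    then have "(\<Sum>j\<in>{1..<n}. g j) = 0" using sumg by simp
    then show ?thesis by simp
  next
    case True
    then have "(\<Sum>j\<in>{1..<n}. g j) = 1" using sumg sumk n by simp
    then obtain j0 where j0: "j0 \<in> {1..<n}" "g j0 = 1" and oth: "\<forall>j\<in>{1..<n} - {j0}. g j = 0"
      using sum_one_nat[of "{1..<n}" g] by auto
    have dz: "digit ns \<tau> j0 = 0" if tau: "\<tau> < length ns" for \<tau>
    proof -
      define d where "d j = digit ns \<tau> j" for j
      have "ns ! \<tau> dvd sum_mset (image_mset (\<lambda>p. digit ns \<tau> (fst p)) m)"
        using suppression[OF pos tau, of m] nz nn UU by simp
      then have dm: "ns ! \<tau> dvd (\<Sum>j<n. d j * k j)"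
        using msum_modes[OF outcomes_set[OF m], of "\<lambda>j. digit ns \<tau> j"] by (simp add: d_def k_def)
      have nzp: "output_state U n (\<lambda>_. 0) (pattern_occ n s) \<noteq> 0" using I by (simp add: ideal_def)
      have "ns ! \<tau> dvd sum_mset (image_mset (\<lambda>p. digit ns \<tau> (fst p)) (pattern_occ n s))"
        using suppression[OF pos tau, of "pattern_occ n s"] nzp nn UU by simp
      then have dp: "ns ! \<tau> dvd (\<Sum>j<n. s j * d j)"
        using msum_pattern[of "\<lambda>p. digit ns \<tau> (fst p)" n s] by (simp add: d_def)
      have pt: "d j * k j = s j * d j + (if j = j0 then d j else 0)" if "j < n" for j
      proof (cases "j = 0")
        case True then show ?thesis using \<open>k 0 = 0\<close> j0 by (simp add: d_def digit_0)
      next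
        case False
        then have j: "j \<in> {1..<n}" using that by simp
        then have "k j = t j + g j" using le g_def by simp
        moreover have "g j = (if j = j0 then 1 else 0)" using j0 oth j by auto
        ultimately show ?thesis using False by (simp add: algebra_simps s_def)
      qed
      have "(\<Sum>j<n. d j * k j) = (\<Sum>j<n. s j * d j + (if j = j0 then d j else 0))"
        by (rule sum.cong) (simp_all add: pt)
      also have "\<dots> = (\<Sum>j<n. s j * d j) + d j0"
        using j0 by (simp add: sum.distrib sum.delta)
      finally have "ns ! \<tau> dvd d j0" using dm dp by (simp add: dvd_add_right_iff)
      moreover have "d j0 < ns ! \<tau>" unfolding d_def using digit_lt[OF pos tau] .
      ultimately show ?thesis unfolding d_def using nat_dvd_not_less by blast
    qed
    have "j0 < prod_list ns" using j0 nn by simp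
    then have "j0 = 0" using digits_zero[of j0 ns] dz by blast
    with j0 show ?thesis by simp
  qed
  have "t j = mode_count m j" if "j \<in> {1..<n}" for j
  proof -
    have "g j = 0" using gz that by blast
    then show ?thesis using le[OF that] unfolding g_def k_def by linarith
  qed
  then show ?thesis by (intro PiE_ext[OF t t0_mem[OF m]]) simp
qed

lemma hlp_eq:
  assumes pos: "\<forall>k\<in>set ns. k > 0" and nn: "n = prod_list ns" and UU: "U = fourier_tensor ns"
    and n: "n > 0" and m: "m \<in> outcomes n K" and nz: "output_state U n (\<lambda>_. 0) m \<noteq> 0"
  shows "herald_lossy_prob U n L m = (if herald_lossless U n m then (1 - L) ^ (n - 1) else 0)"
proof -
  let ?T = "{1..<n} \<rightarrow>\<^sub>E {..n}"
  let ?t0 = "restrict (mode_count m) {1..<n}"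
  have fin: "finite ?T" by (intro finite_PiE) auto
  have "herald_lossy_prob U n L m = fterm U n L m ?t0 + (\<Sum>t\<in>?T - {?t0}. fterm U n L m t)"
    unfolding hlp_fterm using sum.remove[OF fin t0_mem[OF m]] by simp
  also have "(\<Sum>t\<in>?T - {?t0}. fterm U n L m t) = 0"
    by (rule sum.neutral) (use fterm_zero[OF pos nn UU n m nz] in blast)
  finally have "herald_lossy_prob U n L m = fterm U n L m ?t0" by (simp only: add_0_right)
  then show ?thesis using fterm_t0[OF n m, of U L] by (simp only:)
qed



lemma evolve_cong:
  assumes "\<And>i. i < n \<Longrightarrow> c i = c' i"
  shows "i \<le> n \<Longrightarrow> evolve U n c i = evolve U n c' i"
proof (induction i)
  case 0 then show ?case by simp
next
  case (Suc i)
  then have "c i = c' i" using assms by simp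
  with Suc show ?case by simp
qed

lemma output_zero_cfg:
  assumes "\<And>i. i < n \<Longrightarrow> c i = 0"
  shows "output_state U n c = output_state U n (\<lambda>_. 0)"
  unfolding output_state_def by (rule evolve_cong) (use assms in auto)

lemma noise_nonneg: "0 \<le> \<epsilon> \<Longrightarrow> \<epsilon> \<le> 1 \<Longrightarrow> noise_prob model \<epsilon> i k \<ge> 0"
  by (cases model) auto

lemma weight_nonneg: "0 \<le> \<epsilon> \<Longrightarrow> \<epsilon> \<le> 1 \<Longrightarrow> config_weight model \<epsilon> n c \<ge> 0"
  unfolding config_weight_def by (intro prod_nonneg) (simp add: noise_nonneg)

lemma noise_zero: "noise_prob model 0 i k = (if k = 0 then 1 else 0)"
  by (cases model) auto

lemma weight0:
  assumes "config_weight model 0 n c \<noteq> 0" shows "\<And>i. i < n \<Longrightarrow> c i = 0"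
proof (rule ccontr)
  fix i assume i: "i < n" and ne: "c i \<noteq> 0"
  have "config_weight model 0 n c = 0"
    unfolding config_weight_def using i ne
    by (simp only: prod_zero_iff[OF finite_lessThan]) (auto simp: noise_zero)
  with assms show False by simp
qed

theorem theorem7:
  fixes ns :: "nat list" and model :: noise_model and \<epsilon> la :: real
  defines "n \<equiv> prod_list ns"
  defines "U \<equiv> fourier_tensor ns"
  defines "Lam \<equiv> 1 - (1 - la) powr (log 2 (real n))"
  assumes ns2: "\<forall>k\<in>set ns. k \<ge> 2"
    and n2: "n > 2"
    and R: "\<forall>R. model = URS R \<longrightarrow> R \<ge> 1"
    and eps: "0 \<le> \<epsilon>" "\<epsilon> \<le> 1"
    and lam: "0 \<le> la" "la \<le> 1"
  shows "h_lossy U n model \<epsilon> Lam \<ge> (1 - Lam) ^ (n - 1) * h_lossless U n model \<epsilon>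
       \<and> (1 - Lam) ^ (n - 1) * h_lossless U n model \<epsilon>
           = (1 - la) powr (real (n - 1) * log 2 (real n)) * h_lossless U n model \<epsilon>
       \<and> h_lossy U n model 0 Lam = (1 - Lam) ^ (n - 1) * h_lossless U n model 0
       \<and> (1 - Lam) ^ (n - 1) * h_lossless U n model 0
           = (1 - la) powr (real (n - 1) * log 2 (real n)) * h_lossless U n model 0"
proof -
  have pos: "\<forall>k\<in>set ns. k > 0" using ns2 by auto
  have n0: "n > 0" using n2 by simp
  have nn: "n = prod_list ns" by (simp add: n_def)
  have UU: "U = fourier_tensor ns" by (simp add: U_def)
  define q where "q = (1 - la) powr (log 2 (real n))"
  have Lq: "1 - Lam = q" by (simp add: Lam_def q_def)
  have lg: "log 2 (real n) \<ge> 0" using n2 by simp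
  have q0: "0 \<le> q" by (simp add: q_def)
  have q1: "q \<le> 1" unfolding q_def using lam lg by (intro powr_le1) auto
  have L0: "0 \<le> Lam" and L1: "Lam \<le> 1" using Lq q0 q1 by linarith+
  have key: "(1 - Lam) ^ (n - 1) = (1 - la) powr (real (n - 1) * log 2 (real n))"
  proof (cases "la = 1")
    case True
    have "n - 1 \<noteq> 0" using n2 by simp
    then show ?thesis using True Lq by (simp add: q_def)
  next
    case False
    then have p: "1 - la > 0" using lam by simp
    have "(1 - la) powr (real (n - 1) * log 2 (real n)) = q powr real (n - 1)"
      unfolding q_def powr_powr by (simp add: mult.commute)
    also have "\<dots> = q ^ (n - 1)" using p by (intro powr_realpow) (simp add: q_def)
    finally show ?thesis using Lq by simp
  qed
  define C where "C e = configs model n" for e :: real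
  define Outs where "Outs = outcomes n (colours model n)"
  define a where "a c m = (cmod (output_state U n c m))\<^sup>2" for c m
  define Q where "Q = (1 - Lam) ^ (n - 1)"
  have hl: "Q * h_lossless U n model e =
      (\<Sum>c\<in>configs model n. config_weight model e n c *
        (\<Sum>m\<in>Outs. Q * (if herald_lossless U n m then a c m else 0)))" for e
    unfolding h_lossless_def Outs_def a_def by (simp add: sum_distrib_left mult_ac)
  have hy: "h_lossy U n model e Lam =
      (\<Sum>c\<in>configs model n. config_weight model e n c *
        (\<Sum>m\<in>Outs. a c m * herald_lossy_prob U n Lam m))" for e
    unfolding h_lossy_def Outs_def a_def ..
  have a0: "a c m \<ge> 0" for c m by (simp add: a_def)
  have c1: "h_lossy U n model \<epsilon> Lam \<ge> Q * h_lossless U n model \<epsilon>"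
    unfolding hl hy
  proof (intro sum_mono mult_left_mono weight_nonneg eps)
    fix c m assume m: "m \<in> Outs"
    have "Q * (if herald_lossless U n m then a c m else 0)
        = a c m * (if herald_lossless U n m then Q else 0)" by simp
    also have "\<dots> \<le> a c m * herald_lossy_prob U n Lam m"
      using hlp_ge[OF n0 m[unfolded Outs_def] L0 L1, of U] a0 unfolding Q_def
      by (intro mult_left_mono) auto
    finally show "Q * (if herald_lossless U n m then a c m else 0) \<le> a c m * herald_lossy_prob U n Lam m" .
  qed
  have c3: "h_lossy U n model 0 Lam = Q * h_lossless U n model 0"
    unfolding hl hy
  proof (intro sum.cong refl)
    fix c assume c: "c \<in> configs model n"
    show "config_weight model 0 n c * (\<Sum>m\<in>Outs. a c m * herald_lossy_prob U n Lam m) =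
          config_weight model 0 n c * (\<Sum>m\<in>Outs. Q * (if herald_lossless U n m then a c m else 0))"
    proof (cases "config_weight model 0 n c = 0")
      case True then show ?thesis by simp
    next
      case False
      then have oc: "output_state U n c = output_state U n (\<lambda>_. 0)"
        by (intro output_zero_cfg weight0) auto
      have "a c m * herald_lossy_prob U n Lam m = Q * (if herald_lossless U n m then a c m else 0)"
        if m: "m \<in> Outs" for m
      proof (cases "output_state U n (\<lambda>_. 0) m = 0")
        case True then show ?thesis by (simp add: a_def oc)
      next
        case False
        have "herald_lossy_prob U n Lam m = (if herald_lossless U n m then Q else 0)"
          unfolding Q_def
          by (rule hlp_eq[OF pos nn UU n0 m[unfolded Outs_def] False])
        then show ?thesis by simp
      qed
      then show ?thesis by simp
    qed
  qed
  show ?thesis using c1 c3 key unfolding Q_def by simp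
qed

end
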